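(* In the setting below with $P=\mathfrak A$ and the normalized error criterion, suppose $\{S_d\}$ is polynomially tractable with constants $C,p>0$, $q\ge0$. Then $\lambda\in\ell_\tau$ for all $\tau>p/2$; $\epsilon_d^{\rm init}$ tends to zero faster than the inverse of any polynomial as $d\to\infty$ (i.e. $\lambda_{d,\psi(1)}\mathcal P(d)\to0$ for every polynomial $\mathcal P$ positive on $\mathbb N$); $b_d\in O(\ln d)$; and hence $\lim_{d\to\infty}a_d/d=1$. If moreover $\{S_d\}$ is strongly polynomially tractable, then $b_d\in O(1)$.
   Context: Setting: $S_1:H_1\to G_1$ is a compact linear operator between real Hilbert spaces ($H_1$ infinite-dimensional separable); $\lambda=(\lambda_m)_{m\in\mathbb N}$, $\lambda_1\ge\lambda_2\ge\dots\ge0$, are the eigenvalues of $S_1^\dagger S_1$. $S_d=S_1^{\otimes d}:H_1^{\otimes d}\to G_1^{\otimes d}$. For each $d$ fix $\emptyset\ne I_d=\{i_1<\dots<i_{a_d}\}\subset\{1,\dots,d\}$ ($I_1=\{1\}$), put $a_d=\#I_d$, $b_d=d-a_d$, and fix one type $P\in\{\mathfrak S,\mathfrak A\}$ for all $d$; the problem $\{S_d\}$ is the family of restrictions of $S_d$ to the $I_d$-symmetric subspace (if $P=\mathfrak S$) or $I_d$-antisymmetric subspace (if $P=\mathfrak A$) of $H_1^{\otimes d}$, i.e. the range of $\frac1{a_d!}\sum_{\pi}(\pm1)U_\pi$, the sum over permutations $\pi$ of $\{1,\dots,d\}$ fixing all points outside $I_d$, $U_\pi(f_1\otimes\cdots\otimes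 f_d)=f_{\pi(1)}\otimes\cdots\otimes f_{\pi(d)}$, sign $(-1)^{|\pi|}$ used for $\mathfrak A$. Let $\nabla_d=\{k\in\mathbb N^d:k_{i_1}\le\dots\le k_{i_{a_d}}\}$ for $P=\mathfrak S$ and with strict inequalities for $P=\mathfrak A$; $\lambda_{d,k}=\prod_{l=1}^d\lambda_{k_l}$; $\psi:\mathbb N\to\nabla_d$ a bijection with $\lambda_{d,\psi(1)}\ge\lambda_{d,\psi(2)}\ge\cdots$. These are exactly the eigenvalues of $S_d^\dagger S_d$ on the subspace, and the information complexity is $n(\epsilon,d)=\#\{k\in\nabla_d:\lambda_{d,k}>\epsilon^2\}$, the initial error $\epsilon^{\rm init}_d=\sqrt{\lambda_{d,\psi(1)}}$ (equal to $\lambda_1^{d/2}$ if $P=\mathfrak S$, and $\sqrt{\lambda_1^{b_d}\lambda_1\lambda_2\cdots\lambda_{a_d}}$ if $P=\mathfrak A$). Normalized error criterion: polynomially tractable means $\exists C,p>0,q\ge0$ with $n(\epsilon'\epsilon_d^{\rm init},d)\le C(\epsilon')^{-p}d^q$ for all $d\in\mathbb N,\epsilon'\in(0,1]$; strongly polynomially tractable: this with $q=0$. Standing assumptions: $\lambda_2>0$ and $\epsilon_d^{\rm init}>0$ for all $d$. $\ell_\tau$: sequences with $\sum_m\lambda_m^\tau<\infty$. *)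

theory Defs
  imports "HOL-Analysis.Analysis" "HOL-Library.Landau_Symbols"
    "HOL-Computational_Algebra.Polynomial"
begin

text \<open>Eigenvalue sequence lam is indexed from 1 (lam 0 is irrelevant).
  I d is the index set I_d inside {1..d}.\<close>

definition a_num :: "(nat \<Rightarrow> nat set) \<Rightarrow> nat \<Rightarrow> nat" where
  "a_num I d = card (I d)"

definition b_num :: "(nat \<Rightarrow> nat set) \<Rightarrow> nat \<Rightarrow> nat" where
  "b_num I d = d - card (I d)"

definition nablaA :: "(nat \<Rightarrow> nat set) \<Rightarrow> nat \<Rightarrow> (nat \<Rightarrow> nat) set" where
  "nablaA I d = {k \<in> {1..d} \<rightarrow>\<^sub>E {1..}.
      \<forall>i\<in>I d. \<forall>j\<in>I d. i < j \<longrightarrow> k i < k j}"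

definition lam_dk :: "(nat \<Rightarrow> real) \<Rightarrow> nat \<Rightarrow> (nat \<Rightarrow> nat) \<Rightarrow> real" where
  "lam_dk lam d k = (\<Prod>l\<in>{1..d}. lam (k l))"

text \<open>Largest eigenvalue lambda_{d,psi(1)}; the initial error is its square root.\<close>
definition lam_init :: "(nat \<Rightarrow> real) \<Rightarrow> (nat \<Rightarrow> nat set) \<Rightarrow> nat \<Rightarrow> real" where
  "lam_init lam I d = Sup (lam_dk lam d ` nablaA I d)"

definition eps_init :: "(nat \<Rightarrow> real) \<Rightarrow> (nat \<Rightarrow> nat set) \<Rightarrow> nat \<Rightarrow> real" where
  "eps_init lam I d = sqrt (lam_init lam I d)"

text \<open>The set counted by the information complexity n(eps,d).\<close>
definition info_set :: "(nat \<Rightarrow> real) \<Rightarrow> (nat \<Rightarrow> nat set) \<Rightarrow> real \<Rightarrow> nat \<Rightarrow> (nat \<Rightarrow> nat) set" where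
  "info_set lam I eps d = {k \<in> nablaA I d. lam_dk lam d k > eps\<^sup>2}"

text \<open>n(eps' * eps_init_d, d) \<le> C eps'^(-p) d^q, with n finite (an infinite
  complexity violates any such bound).\<close>
definition normalized_bound :: "(nat \<Rightarrow> real) \<Rightarrow> (nat \<Rightarrow> nat set) \<Rightarrow> real \<Rightarrow> real \<Rightarrow> real \<Rightarrow> bool" where
  "normalized_bound lam I C p q \<longleftrightarrow>
     (\<forall>d\<ge>1. \<forall>e. 0 < e \<and> e \<le> 1 \<longrightarrow>
        finite (info_set lam I (e * eps_init lam I d) d) \<and>
        real (card (info_set lam I (e * eps_init lam I d) d)) \<le> C * e powr (-p) * real d powr q)"

definition strongly_poly_tractable_A :: "(nat \<Rightarrow> real) \<Rightarrow> (nat \<Rightarrow> nat set) \<Rightarrow> bool" where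
  "strongly_poly_tractable_A lam I \<longleftrightarrow> (\<exists>C p. C > 0 \<and> p > 0 \<and> normalized_bound lam I C p 0)"

end

theory Submission
  imports Defs "HOL-Real_Asymp.Real_Asymp"
begin


locale setting =
  fixes lam :: "nat \<Rightarrow> real" and I :: "nat \<Rightarrow> nat set"
  assumes lam_nonneg: "\<And>m. m \<ge> 1 \<Longrightarrow> lam m \<ge> 0"
    and lam_mono: "\<And>m n. 1 \<le> m \<Longrightarrow> m \<le> n \<Longrightarrow> lam n \<le> lam m"
    and lam2_pos: "lam 2 > 0"
    and I_sub: "\<And>d. d \<ge> 1 \<Longrightarrow> I d \<subseteq> {1..d}"
begin

lemma prod_nonneg_lam: "(\<forall>l\<in>A. f l \<ge> 1) \<Longrightarrow> (\<Prod>l\<in>A. lam (f l)) \<ge> 0"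
  by (intro prod_nonneg) (auto intro: lam_nonneg)

lemma prod_inj_le:
  "finite J \<Longrightarrow> inj_on f J \<Longrightarrow> (\<forall>l\<in>J. f l \<ge> 1) \<Longrightarrow>
   (\<Prod>l\<in>J. lam (f l)) \<le> (\<Prod>i=1..card J. lam i)"
proof (induction "card J" arbitrary: J)
  case 0
  then show ?case by simp
next
  case (Suc n)
  then have ne: "J \<noteq> {}" by auto
  obtain x where x: "x \<in> J" "\<forall>y\<in>J. f y \<le> f x"
  proof -
    have "Max (f ` J) \<in> f ` J" using Suc.prems ne by (intro Max_in) auto
    then obtain x where "x \<in> J" "f x = Max (f ` J)" by auto
    moreover have "\<forall>y\<in>J. f y \<le> Max (f ` J)" using Suc.prems by auto
    ultimately show ?thesis using that by auto
  qed
  let ?J = "J - {x}"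
  have cJ: "card ?J = n" using Suc.hyps(2) x(1) Suc.prems by simp
  have IH: "(\<Prod>l\<in>?J. lam (f l)) \<le> (\<Prod>i=1..n. lam i)"
    using Suc.hyps(1)[of ?J] cJ Suc.prems by (auto intro: inj_on_subset)
  have "card J = card (f ` J)" using Suc.prems by (simp add: card_image)
  also have "\<dots> \<le> card {1..f x}" using x Suc.prems by (intro card_mono) auto
  finally have "Suc n \<le> f x" using Suc.hyps(2) by simp
  then have lx: "lam (f x) \<le> lam (Suc n)" by (intro lam_mono) auto
  have "(\<Prod>l\<in>J. lam (f l)) = lam (f x) * (\<Prod>l\<in>?J. lam (f l))"
    using Suc.prems x by (simp add: prod.remove)
  also have "\<dots> \<le> lam (Suc n) * (\<Prod>i=1..n. lam i)"
    using lx IH Suc.prems by (intro mult_mono prod_nonneg_lam lam_nonneg) auto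
  also have "\<dots> = (\<Prod>i=1..Suc n. lam i)" by (simp add: prod.cl_ivl_Suc mult.commute)
  finally show ?case using Suc.hyps(2) by simp
qed

end

definition rank :: "nat set \<Rightarrow> nat \<Rightarrow> nat" where
  "rank J l = card {j\<in>J. j < l}"

lemma rank_mono: "finite J \<Longrightarrow> l \<in> J \<Longrightarrow> l' \<in> J \<Longrightarrow> l < l' \<Longrightarrow> rank J l < rank J l'"
  unfolding rank_def by (intro psubset_card_mono) auto

lemma rank_less: "finite J \<Longrightarrow> l \<in> J \<Longrightarrow> rank J l < card J"
  unfolding rank_def by (intro psubset_card_mono) auto

lemma rank_inj: "finite J \<Longrightarrow> inj_on (rank J) J"
  unfolding inj_on_def by (metis linorder_neqE_nat less_irrefl rank_mono)

lemma rank_bij: "finite J \<Longrightarrow> bij_betw (rank J) J {..<card J}"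
proof -
  assume f: "finite J"
  have sub: "rank J ` J \<subseteq> {..<card J}" using rank_less[OF f] by auto
  have "card (rank J ` J) = card {..<card J}" using rank_inj[OF f] by (simp add: card_image)
  then have "rank J ` J = {..<card J}" using sub by (intro card_subset_eq) auto
  then show ?thesis using rank_inj[OF f] by (simp add: bij_betw_def)
qed

definition kS :: "(nat \<Rightarrow> nat set) \<Rightarrow> nat \<Rightarrow> nat set \<Rightarrow> nat \<Rightarrow> nat" where
  "kS I d S = (\<lambda>l. if l \<in> {1..d} then (if l \<in> I d then rank (I d) l + 1 else if l \<in> S then 2 else 1) else undefined)"

context setting begin

lemma finI: "d \<ge> 1 \<Longrightarrow> finite (I d)"
  using I_sub finite_subset by blast

lemma kS_in: assumes d: "d \<ge> 1" shows "kS I d S \<in> nablaA I d"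
proof -
  have "\<forall>i\<in>I d. \<forall>j\<in>I d. i < j \<longrightarrow> kS I d S i < kS I d S j"
  proof (intro ballI impI)
    fix i j assume ij: "i \<in> I d" "j \<in> I d" "i < j"
    then have "i \<in> {1..d}" "j \<in> {1..d}" using I_sub[OF d] by auto
    then show "kS I d S i < kS I d S j" using ij rank_mono[OF finI[OF d] ij] by (simp add: kS_def)
  qed
  then show ?thesis unfolding nablaA_def kS_def by auto
qed

lemma kS_inj: "S \<subseteq> {1..d} - I d \<Longrightarrow> S' \<subseteq> {1..d} - I d \<Longrightarrow> kS I d S = kS I d S' \<Longrightarrow> S = S'"
proof -
  assume a: "S \<subseteq> {1..d} - I d" "S' \<subseteq> {1..d} - I d" "kS I d S = kS I d S'"
  have "l \<in> S \<longleftrightarrow> l \<in> S'" for l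
  proof (cases "l \<in> {1..d} - I d")
    case True
    have "kS I d S l = kS I d S' l" using a by simp
    moreover have "kS I d T l = (if l \<in> T then 2 else 1)" for T using True by (simp add: kS_def)
    ultimately show ?thesis by (metis numeral_eq_one_iff semiring_norm(85))
  next
    case False then show ?thesis using a by auto
  qed
  then show ?thesis by auto
qed

lemma b_card: "d \<ge> 1 \<Longrightarrow> card ({1..d} - I d) = b_num I d"
  unfolding b_num_def using I_sub by (simp add: card_Diff_subset finI)

lemma prod_J: "d \<ge> 1 \<Longrightarrow> (\<Prod>l\<in>I d. lam (rank (I d) l + 1)) = (\<Prod>i=1..a_num I d. lam i)"
proof -
  assume d: "d \<ge> 1"
  have "(\<Prod>l\<in>I d. lam (rank (I d) l + 1)) = (\<Prod>i\<in>{..<card (I d)}. lam (i + 1))"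
    using prod.reindex_bij_betw[OF rank_bij[OF finI[OF d]], of "\<lambda>i. lam (i+1)"] by simp
  also have "\<dots> = (\<Prod>i=1..card (I d). lam i)"
    by (rule prod.reindex_bij_witness[where i="\<lambda>i. i - 1" and j="\<lambda>i. i + 1"]) auto
  finally show ?thesis by (simp add: a_num_def)
qed

lemma split_prod: "d \<ge> 1 \<Longrightarrow> (\<Prod>l\<in>{1..d}. g l) = (\<Prod>l\<in>I d. g l) * (\<Prod>l\<in>{1..d} - I d. g l)"
  using I_sub[of d] by (metis finite_atLeastAtMost prod.subset_diff mult.commute)

lemma kS_val:
  assumes d: "d \<ge> 1" and S: "S \<subseteq> {1..d} - I d"
  shows "lam_dk lam d (kS I d S) = lam 2 ^ card S * lam 1 ^ (b_num I d - card S) * (\<Prod>i=1..a_num I d. lam i)"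
proof -
  have fS: "finite S" using S finite_subset by blast
  have e1: "lam_dk lam d (kS I d S) = (\<Prod>l\<in>I d. lam (kS I d S l)) * (\<Prod>l\<in>{1..d} - I d. lam (kS I d S l))"
    unfolding lam_dk_def using split_prod[OF d] .
  have "(\<Prod>l\<in>I d. lam (kS I d S l)) = (\<Prod>l\<in>I d. lam (rank (I d) l + 1))"
    using I_sub[OF d] by (intro prod.cong) (auto simp: kS_def)
  then have e2: "(\<Prod>l\<in>I d. lam (kS I d S l)) = (\<Prod>i=1..a_num I d. lam i)" using prod_J[OF d] by simp
  have e3: "(\<Prod>l\<in>{1..d} - I d. lam (kS I d S l)) = (\<Prod>l\<in>{1..d} - I d. if l \<in> S then lam 2 else lam 1)"
    by (intro prod.cong) (auto simp: kS_def)
  have e4: "(\<Prod>l\<in>{1..d} - I d. if l \<in> S then lam 2 else lam 1) = (\<Prod>l\<in>({1..d} - I d) \<inter> {l. l \<in> S}. lam 2) * (\<Prod>l\<in>({1..d} - I d) \<inter> - {l. l \<in> S}. lam 1)"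
    by (rule prod.If_cases) simp
  have e5: "({1..d} - I d) \<inter> {l. l \<in> S} = S" using S by auto
  have e6: "({1..d} - I d) \<inter> - {l. l \<in> S} = ({1..d} - I d) - S" by auto
  have e7: "card (({1..d} - I d) - S) = b_num I d - card S"
    using b_card[OF d] S fS by (simp add: card_Diff_subset)
  have e8: "(\<Prod>l\<in>{1..d} - I d. lam (kS I d S l)) = lam 2 ^ card S * lam 1 ^ (b_num I d - card S)"
    unfolding e3 e4 e5 e6 using e7 by simp
  show ?thesis unfolding e1 e2 e8 by (simp add: mult_ac)
qed

definition Ld where "Ld d = lam 1 ^ b_num I d * (\<Prod>i=1..a_num I d. lam i)"

lemma upper: assumes d: "d \<ge> 1" and k: "k \<in> nablaA I d" shows "lam_dk lam d k \<le> Ld d"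
proof -
  have kP: "k \<in> {1..d} \<rightarrow>\<^sub>E {1..}" and km: "\<forall>i\<in>I d. \<forall>j\<in>I d. i < j \<longrightarrow> k i < k j"
    using k unfolding nablaA_def by simp_all
  have kv: "\<forall>l\<in>{1..d}. k l \<ge> 1" using PiE_mem[OF kP] by simp
  have inj: "inj_on k (I d)"
    unfolding inj_on_def by (metis km linorder_neqE_nat less_irrefl)
  have A: "(\<Prod>l\<in>I d. lam (k l)) \<le> (\<Prod>i=1..a_num I d. lam i)"
    unfolding a_num_def using kv I_sub[OF d] by (intro prod_inj_le finI[OF d] inj) auto
  have B: "(\<Prod>l\<in>{1..d} - I d. lam (k l)) \<le> (\<Prod>l\<in>{1..d} - I d. lam 1)"
    using kv by (intro prod_mono) (auto intro: lam_nonneg lam_mono)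
  have "lam_dk lam d k = (\<Prod>l\<in>I d. lam (k l)) * (\<Prod>l\<in>{1..d} - I d. lam (k l))"
    unfolding lam_dk_def using split_prod[OF d] .
  also have "\<dots> \<le> (\<Prod>i=1..a_num I d. lam i) * (\<Prod>l\<in>{1..d} - I d. lam 1)"
    using A B kv I_sub[OF d] by (intro mult_mono prod_nonneg_lam) (auto intro!: prod_nonneg lam_nonneg)
  also have "\<dots> = Ld d" unfolding Ld_def using b_card[OF d] by simp
  finally show ?thesis .
qed

lemma lam_init_eq: assumes d: "d \<ge> 1" shows "lam_init lam I d = Ld d"
proof -
  have "lam_dk lam d (kS I d {}) = Ld d" using kS_val[OF d, of "{}"] by (simp add: Ld_def)
  then have "Ld d \<in> lam_dk lam d ` nablaA I d" using kS_in[OF d, of "{}"] by (metis image_eqI)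
  then show ?thesis unfolding lam_init_def
  proof (rule cSup_eq_maximum)
    fix x assume "x \<in> lam_dk lam d ` nablaA I d"
    then obtain k where "k \<in> nablaA I d" "x = lam_dk lam d k" by blast
    then show "x \<le> Ld d" using upper[OF d] by simp
  qed
qed

end



context setting begin

lemma Ld_pos: "d \<ge> 1 \<Longrightarrow> eps_init lam I d > 0 \<Longrightarrow> Ld d > 0"
  using lam_init_eq[of d] unfolding eps_init_def by (metis real_sqrt_gt_0_iff)

lemma lam1_pos: "lam 1 > 0" and lam21: "lam 2 \<le> lam 1"
  using lam2_pos lam_mono[of 1 2] by auto

lemma binom_bound:
  assumes PT: "normalized_bound lam I C p q" and p: "p > 0"
    and d: "d \<ge> 1" and ip: "eps_init lam I d > 0" and j: "j \<le> b_num I d"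
  shows "real (b_num I d choose j) \<le> C * 2 powr (p/2) * ((lam 1 / lam 2) powr (p/2)) ^ j * real d powr q"
proof -
  define r where "r = lam 2 / lam 1"
  have r: "0 < r" "r \<le> 1" unfolding r_def using lam1_pos lam21 lam2_pos by auto
  define e where "e = sqrt (r ^ j / 2)"
  have rj: "0 < r ^ j" "r ^ j \<le> 1" using r by (auto simp: power_le_one)
  have e: "0 < e" "e \<le> 1" unfolding e_def using rj by auto
  have PTd: "finite (info_set lam I (e * eps_init lam I d) d)"
    "real (card (info_set lam I (e * eps_init lam I d) d)) \<le> C * e powr (-p) * real d powr q"
    using PT d e unfolding normalized_bound_def by auto
  define B where "B = {1..d} - I d"
  define Fam where "Fam = kS I d ` {S. S \<subseteq> B \<and> card S = j}"
  have Ldp: "Ld d > 0" using Ld_pos[OF d ip] .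
  have eps2: "(e * eps_init lam I d)\<^sup>2 = r ^ j / 2 * Ld d"
    unfolding e_def eps_init_def using lam_init_eq[OF d] Ldp rj
    by (simp add: power_mult_distrib)
  have sub: "Fam \<subseteq> info_set lam I (e * eps_init lam I d) d"
  proof
    fix k assume "k \<in> Fam"
    then obtain S where S: "S \<subseteq> B" "card S = j" "k = kS I d S" unfolding Fam_def by auto
    have "lam_dk lam d k = lam 2 ^ j * lam 1 ^ (b_num I d - j) * (\<Prod>i=1..a_num I d. lam i)"
      using kS_val[OF d, of S] S unfolding B_def by simp
    also have "lam 2 ^ j = r ^ j * lam 1 ^ j" unfolding r_def using lam1_pos
      by (simp add: power_divide)
    also have "r ^ j * lam 1 ^ j * lam 1 ^ (b_num I d - j) * (\<Prod>i=1..a_num I d. lam i) = r ^ j * Ld d"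
      unfolding Ld_def using j by (simp add: power_add[symmetric] mult_ac)
    finally have "lam_dk lam d k = r ^ j * Ld d" .
    moreover have "r ^ j / 2 * Ld d < r ^ j * Ld d" using rj Ldp by simp
    ultimately show "k \<in> info_set lam I (e * eps_init lam I d) d"
      unfolding info_set_def using eps2 kS_in[OF d] S by auto
  qed
  have finB: "finite B" unfolding B_def by simp
  have "card Fam = card {S. S \<subseteq> B \<and> card S = j}"
    unfolding Fam_def
    by (intro card_image inj_onI) (use kS_inj[of _ d] in \<open>auto simp: B_def\<close>)
  also have "\<dots> = b_num I d choose j" using n_subsets[OF finB] b_card[OF d] unfolding B_def by simp
  finally have cF: "card Fam = b_num I d choose j" .
  have "card Fam \<le> card (info_set lam I (e * eps_init lam I d) d)"
    using card_mono[OF PTd(1) sub] .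
  then have "real (b_num I d choose j) \<le> C * e powr (-p) * real d powr q"
    using PTd(2) cF by linarith
  also have "e powr (-p) = 2 powr (p/2) * ((lam 1 / lam 2) powr (p/2)) ^ j"
  proof -
    have "e powr (-p) = ((r ^ j / 2) powr (1/2)) powr (-p)"
      unfolding e_def using rj by (simp add: powr_half_sqrt)
    also have "\<dots> = (r ^ j / 2) powr (- (p/2))" by (simp add: powr_powr)
    also have "\<dots> = 2 powr (p/2) / (r ^ j) powr (p/2)"
      using rj by (simp add: powr_minus powr_divide divide_simps)
    also have "(r ^ j) powr (p/2) = (r powr (p/2)) ^ j"
    proof -
      have "(r ^ j) powr (p/2) = (r powr (real j)) powr (p/2)" using r by (simp add: powr_realpow)
      also have "\<dots> = (r powr (p/2)) powr (real j)" by (simp add: powr_powr mult.commute)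
      also have "\<dots> = (r powr (p/2)) ^ j" using r by (simp add: powr_realpow)
      finally show ?thesis .
    qed
    also have "r powr (p/2) = 1 / (lam 1 / lam 2) powr (p/2)"
      unfolding r_def using lam1_pos lam2_pos by (simp add: powr_divide divide_simps)
    finally show ?thesis by (simp add: power_one_over)
  qed
  finally show ?thesis by (simp add: mult_ac)
qed

end



context setting begin

lemma b_bound:
  assumes PT: "normalized_bound lam I C p q" and p: "p > 0" and Cp: "C > 0" and q: "q \<ge> 0"
    and ip: "\<And>d. d \<ge> 1 \<Longrightarrow> eps_init lam I d > 0"
  shows "\<exists>K\<ge>0. \<forall>d\<ge>1. real (b_num I d) \<le> K * (1 + q * ln (real d))"
proof -
  define c where "c = (lam 1 / lam 2) powr (p/2)"
  define C2 where "C2 = C * 2 powr (p/2)"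
  have c1: "c \<ge> 1" unfolding c_def using lam21 lam2_pos p
    by (intro ge_one_powr_ge_zero) (auto simp: field_simps)
  have C2p: "C2 > 0" unfolding C2_def using Cp by simp
  define m where "m = nat \<lceil>3 * c\<rceil>"
  have m3c: "real m \<ge> 3 * c" unfolding m_def by linarith
  have m1: "real m \<ge> 1" using m3c c1 by linarith
  define K where "K = real m * (\<bar>ln C2\<bar> + 1)"
  have mK: "real m \<le> K" unfolding K_def using m1 by (simp add: mult_le_cancel_left1 less_le_not_le)
  have K0: "K \<ge> 0" using mK m1 by linarith
  show ?thesis
  proof (intro exI[of _ K] conjI allI impI K0)
    fix d :: nat assume d: "d \<ge> 1"
    define b where "b = b_num I d"
    have lnd: "ln (real d) \<ge> 0" using d by simp
    have qln: "q * ln (real d) \<ge> 0" using q lnd by simp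
    show "real (b_num I d) \<le> K * (1 + q * ln (real d))"
    proof (cases "b < m")
      case True
      then have "real b \<le> K" using mK by linarith
      also have "K \<le> K * (1 + q * ln (real d))" using K0 qln by (simp add: mult_le_cancel_left1)
      finally show ?thesis unfolding b_def .
    next
      case False
      define j where "j = b div m"
      have mpos: "m > 0" using m1 by simp
      have j1: "j \<ge> 1" unfolding j_def using False mpos div_greater_zero_iff[of b m] by linarith
      have jm: "j * m \<le> b" unfolding j_def by simp
      have bmod: "b = j * m + b mod m" unfolding j_def by simp
      have "b mod m < m" using mpos by simp
      then have bm: "b < m * (j + 1)" using bmod by (simp add: algebra_simps)
      have jjm: "j * 1 \<le> j * m" using mpos by (intro mult_le_mono2) simp
      have jb: "j \<le> b" using le_trans[OF jjm jm] by simp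
      have jmr: "real j * real m \<le> real b" using jm by (metis of_nat_le_iff of_nat_mult)
      have jpos: "real j > 0" using j1 by simp
      have bj: "real b / real j \<ge> real m"
        using jmr jpos by (simp add: pos_le_divide_eq mult.commute)
      have "(3 * c) ^ j \<le> (real b / real j) ^ j"
        using m3c bj c1 by (intro power_mono) auto
      also have "\<dots> \<le> real (b choose j)" using binomial_ge_n_over_k_pow_k[OF jb] by simp
      also have "\<dots> \<le> C2 * c ^ j * real d powr q"
        using binom_bound[OF PT p d ip[OF d], of j] jb unfolding b_def C2_def c_def by simp
      finally have "3 ^ j * c ^ j \<le> C2 * real d powr q * c ^ j" by (simp add: power_mult_distrib mult_ac)
      then have ineq: "3 ^ j \<le> C2 * real d powr q" using c1 by simp
      have "real j * ln 3 = ln (3 ^ j)" by (simp add: ln_realpow)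
      also have "\<dots> \<le> ln (C2 * real d powr q)" using ineq by (intro ln_mono) auto
      also have "\<dots> = ln C2 + q * ln (real d)" using C2p d by (simp add: ln_mult ln_powr)
      finally have "real j * ln 3 \<le> ln C2 + q * ln (real d)" .
      moreover have "real j * 1 \<le> real j * ln 3" using ln3_gt_1 by (intro mult_left_mono) auto
      ultimately have jle: "real j \<le> \<bar>ln C2\<bar> + q * ln (real d)" by linarith
      have "real b \<le> real m * (real j + 1)" proof -
        have "b \<le> m * (j + 1)" using bm by simp
        then have "real b \<le> real (m * (j + 1))" by (simp only: of_nat_le_iff)
        then show ?thesis by (simp add: algebra_simps)
      qed
      also have "\<dots> \<le> real m * (\<bar>ln C2\<bar> + 1 + q * ln (real d))" using jle m1 by (intro mult_left_mono) auto
      also have "\<dots> = K + real m * (q * ln (real d))" unfolding K_def by (simp add: algebra_simps)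
      also have "\<dots> \<le> K + K * (q * ln (real d))" using mK qln by (intro add_left_mono mult_right_mono) auto
      finally show ?thesis unfolding b_def by (simp add: algebra_simps)
    qed
  qed
qed

end



lemma poly_bound: "\<exists>K\<ge>0. \<exists>N. \<forall>x::real. x \<ge> 1 \<longrightarrow> \<bar>poly P x\<bar> \<le> K * x ^ N"
proof (induction P)
  case 0
  then show ?case by (intro exI[of _ 0]) auto
next
  case (pCons a P)
  then obtain K N where K: "K \<ge> 0" "\<forall>x::real. x \<ge> 1 \<longrightarrow> \<bar>poly P x\<bar> \<le> K * x ^ N" by blast
  show ?case
  proof (intro exI[of _ "\<bar>a\<bar> + K"] exI[of _ "Suc N"] conjI allI impI)
    show "\<bar>a\<bar> + K \<ge> 0" using K by simp
    fix x :: real assume x: "x \<ge> 1"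
    have xN: "1 \<le> x ^ Suc N" using x one_le_power[of x "Suc N"] by simp
    have "\<bar>poly (pCons a P) x\<bar> \<le> \<bar>a\<bar> + x * \<bar>poly P x\<bar>"
      using x by (simp add: abs_mult abs_triangle_ineq[THEN order_trans])
    also have "x * \<bar>poly P x\<bar> \<le> x * (K * x ^ N)" using K x by (intro mult_left_mono) auto
    also have "\<bar>a\<bar> \<le> \<bar>a\<bar> * x ^ Suc N" using xN by (simp add: mult_le_cancel_left1)
    finally show "\<bar>poly (pCons a P) x\<bar> \<le> (\<bar>a\<bar> + K) * x ^ Suc N" by (simp add: algebra_simps)
  qed
qed

context setting begin

lemma ab_sum: "d \<ge> 1 \<Longrightarrow> a_num I d + b_num I d = d"
proof -
  assume d: "d \<ge> 1"
  have "card (I d) \<le> card {1..d}" using I_sub[OF d] by (intro card_mono) auto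
  then show ?thesis unfolding a_num_def b_num_def by simp
qed

lemma prod_decay:
  assumes lim: "lam \<longlonglongrightarrow> 0"
  shows "\<exists>Y>0. \<forall>n. (\<Prod>i=1..n. lam i) \<le> Y * (1/2) ^ n"
proof -
  obtain M0 where M0: "\<forall>n\<ge>M0. lam n < 1/2"
    using order_tendstoD(2)[OF lim, of "1/2"] by (auto simp: eventually_sequentially)
  define M where "M = max M0 1"
  define L1 where "L1 = max 1 (lam 1)"
  have L1: "L1 \<ge> 1" "\<forall>i\<ge>1. lam i \<le> L1" unfolding L1_def using lam_mono by (auto intro: le_max_iff_disj[THEN iffD2])
  have pL: "(\<Prod>i=1..n. lam i) \<le> L1 ^ n" for n
  proof -
    have "(\<Prod>i=1..n. lam i) \<le> (\<Prod>i=1..n. L1)" using L1 by (intro prod_mono) (auto intro: lam_nonneg)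
    then show ?thesis by simp
  qed
  have nn: "0 \<le> (\<Prod>i=1..k. lam i)" for k by (intro prod_nonneg) (auto intro: lam_nonneg)
  have tail: "(\<Prod>i=1..n. lam i) \<le> (\<Prod>i=1..M. lam i) * (1/2) ^ (n - M)" if "n \<ge> M" for n
    using that
  proof (induction n rule: dec_induct)
    case base then show ?case by simp
  next
    case (step n)
    have "(\<Prod>i=1..Suc n. lam i) = (\<Prod>i=1..n. lam i) * lam (Suc n)" by (simp add: prod.cl_ivl_Suc)
    also have "\<dots> \<le> ((\<Prod>i=1..M. lam i) * (1/2) ^ (n - M)) * (1/2)"
      using step M0 nn unfolding M_def
      by (intro mult_mono) (auto intro: lam_nonneg less_imp_le)
    also have "\<dots> = (\<Prod>i=1..M. lam i) * (1/2) ^ (Suc n - M)" using step(1)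
      by (simp add: Suc_diff_le)
    finally show ?case .
  qed
  define Y where "Y = (2 * L1) ^ M"
  show ?thesis
  proof (intro exI[of _ Y] conjI allI)
    show "Y > 0" unfolding Y_def using L1 by simp
    fix n
    show "(\<Prod>i=1..n. lam i) \<le> Y * (1/2) ^ n"
    proof (cases "n \<ge> M")
      case True
      have "(\<Prod>i=1..n. lam i) \<le> (\<Prod>i=1..M. lam i) * (1/2) ^ (n - M)" using tail[OF True] .
      also have "\<dots> \<le> L1 ^ M * (1/2) ^ (n - M)" using pL by (intro mult_right_mono) auto
      also have "(1/2::real) ^ (n - M) = 2 ^ M * (1/2) ^ n"
        using True by (simp add: power_diff field_simps)
      finally show ?thesis unfolding Y_def by (simp add: power_mult_distrib mult_ac)
    next
      case False
      have "(\<Prod>i=1..n. lam i) \<le> L1 ^ n" using pL .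
      also have "\<dots> \<le> L1 ^ M" using False L1 by (intro power_increasing) auto
      also have "\<dots> \<le> L1 ^ M * (2 ^ M * (1/2) ^ n)"
      proof -
        have "(2::real) ^ M * (1/2) ^ n \<ge> 1" using False
          by (simp add: power_diff[symmetric] field_simps one_le_power
                        power_increasing[of n M "2::real", simplified])
        then show ?thesis using L1 by (simp add: mult_le_cancel_left1)
      qed
      finally show ?thesis unfolding Y_def by (simp add: power_mult_distrib mult_ac)
    qed
  qed
qed

end



context setting begin

lemma lam_powr_bound:
  assumes PT: "normalized_bound lam I C p q" and p: "p > 0" and Cp: "C > 0"
    and I1: "I 1 = {1}" and ip1: "eps_init lam I 1 > 0" and m: "m \<ge> 1"
  shows "real m * lam m powr (p/2) \<le> C * (2 * lam 1) powr (p/2)"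
proof (cases "lam m = 0")
  case True
  then show ?thesis using Cp lam1_pos by simp
next
  case False
  then have lm: "lam m > 0" using lam_nonneg[OF m] by simp
  have lm1: "lam m \<le> lam 1" using lam_mono[OF _ m] by simp
  define t where "t = lam m / 2"
  define e where "e = sqrt (t / lam 1)"
  have tpos: "t > 0" "t \<le> lam 1" unfolding t_def using lm lm1 by auto
  have e: "0 < e" "e \<le> 1" unfolding e_def using tpos lam1_pos by auto
  have PT1: "finite (info_set lam I (e * eps_init lam I 1) 1)"
    "real (card (info_set lam I (e * eps_init lam I 1) 1)) \<le> C * e powr (-p) * real (1::nat) powr q"
    using PT e unfolding normalized_bound_def by auto
  have L1: "Ld 1 = lam 1" unfolding Ld_def a_num_def b_num_def I1 by simp
  have eps2: "(e * eps_init lam I 1)\<^sup>2 = t"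
    unfolding e_def eps_init_def using lam_init_eq[of 1] L1 tpos lam1_pos
    by (simp add: power_mult_distrib)
  define kk where "kk = (\<lambda>i::nat. \<lambda>l::nat. if l \<in> {1..1::nat} then i else undefined)"
  have sub: "kk ` {1..m} \<subseteq> info_set lam I (e * eps_init lam I 1) 1"
  proof
    fix k assume "k \<in> kk ` {1..m}"
    then obtain i where i: "i \<in> {1..m}" "k = kk i" by auto
    have "k \<in> nablaA I 1" unfolding nablaA_def i(2) kk_def I1 using i(1) by (auto split: if_splits)
    moreover have "lam_dk lam 1 k = lam i" unfolding lam_dk_def i(2) kk_def by simp
    moreover have "lam i > t" using lam_mono[of i m] i(1) lm unfolding t_def by auto
    ultimately show "k \<in> info_set lam I (e * eps_init lam I 1) 1"
      unfolding info_set_def eps2 by simp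
  qed
  have inj: "inj_on kk {1..m}"
  proof (rule inj_onI)
    fix x y assume "kk x = kk y"
    then have "kk x 1 = kk y 1" by simp
    then show "x = y" unfolding kk_def by simp
  qed
  have "m = card (kk ` {1..m})" using card_image[OF inj] by simp
  also have "\<dots> \<le> card (info_set lam I (e * eps_init lam I 1) 1)" using card_mono[OF PT1(1) sub] .
  finally have "real m \<le> C * e powr (-p)" using PT1(2) by simp
  also have "e powr (-p) = (2 * lam 1) powr (p/2) / lam m powr (p/2)"
  proof -
    have "e powr (-p) = ((t / lam 1) powr (1/2)) powr (-p)"
      unfolding e_def using tpos lam1_pos by (simp add: powr_half_sqrt)
    also have "\<dots> = (t / lam 1) powr (- (p/2))" by (simp add: powr_powr)
    also have "\<dots> = (lam 1 / t) powr (p/2)" using tpos lam1_pos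
      by (simp add: powr_minus powr_divide divide_simps)
    also have "\<dots> = (2 * lam 1) powr (p/2) / lam m powr (p/2)"
      unfolding t_def using lm lam1_pos by (simp add: powr_divide mult.commute)
    finally show ?thesis .
  qed
  finally have "real m \<le> C * ((2 * lam 1) powr (p/2) / lam m powr (p/2))" .
  then show ?thesis using lm by (simp add: field_simps)
qed

lemma summable_lam:
  assumes K0: "K0 \<ge> 0" and bd: "\<And>m. m \<ge> 1 \<Longrightarrow> real m * lam m powr (p/2) \<le> K0"
    and p: "p > 0" and tau: "\<tau> > p / 2"
  shows "summable (\<lambda>m. lam (Suc m) powr \<tau>)"
proof -
  define s where "s = 2 * \<tau> / p"
  have s1: "s > 1" unfolding s_def using p tau by (simp add: field_simps)
  have sg: "summable (\<lambda>m. K0 powr s * real (Suc m) powr (- s))"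
  proof -
    have "summable (\<lambda>n. real n powr (- s))" using s1 by (subst summable_real_powr_iff) simp
    then have "summable (\<lambda>n. real (Suc n) powr (- s))" by (subst summable_Suc_iff)
    then show ?thesis by (rule summable_mult)
  qed
  show ?thesis
  proof (rule summable_comparison_test[OF _ sg], intro exI[of _ 0] allI impI)
    fix m :: nat
    have nn: "lam (Suc m) \<ge> 0" using lam_nonneg by simp
    have "lam (Suc m) powr \<tau> = (lam (Suc m) powr (p/2)) powr s"
      unfolding s_def using p by (simp add: powr_powr)
    also have "\<dots> \<le> (K0 / real (Suc m)) powr s"
      using bd[of "Suc m"] s1 by (intro powr_mono2) (auto simp: field_simps)
    also have "\<dots> = K0 powr s * real (Suc m) powr (- s)"
      using K0 by (subst powr_divide) (auto simp: powr_minus divide_inverse)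
    finally show "norm (lam (Suc m) powr \<tau>) \<le> K0 powr s * real (Suc m) powr (- s)" by simp
  qed
qed

end



context setting begin

lemma superpoly:
  assumes lim: "lam \<longlonglongrightarrow> 0" and Kb: "K \<ge> 0" and q: "q \<ge> 0"
    and bb: "\<forall>d\<ge>1. real (b_num I d) \<le> K * (1 + q * ln (real d))"
  shows "(\<lambda>d. lam_init lam I d * poly P (real d)) \<longlonglongrightarrow> 0"
proof -
  obtain Y where Y: "Y > 0" "\<forall>n. (\<Prod>i=1..n. lam i) \<le> Y * (1/2) ^ n" using prod_decay[OF lim] by blast
  obtain Kp N where Kp: "Kp \<ge> 0" "\<forall>x::real. x \<ge> 1 \<longrightarrow> \<bar>poly P x\<bar> \<le> Kp * x ^ N"
    using poly_bound[of P] by blast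
  define L1 where "L1 = max 1 (lam 1)"
  have L1: "L1 \<ge> 1" "lam 1 \<le> L1" unfolding L1_def by auto
  define c2 where "c2 = ln (2 * L1)"
  have c2: "c2 \<ge> 0" unfolding c2_def using L1 by simp
  define A where "A = K * q * c2"
  define g where "g = (\<lambda>x::real. (Y * Kp * exp (K * c2)) * (exp (A * ln x) * x ^ N * (1/2) powr x))"
  have "((\<lambda>x::real. exp (A * ln x) * x ^ N * (1/2) powr x) \<longlongrightarrow> 0) at_top" by real_asymp
  then have "(g \<longlongrightarrow> 0) at_top" unfolding g_def by (rule tendsto_mult_right_zero)
  then have glim: "(\<lambda>d::nat. g (real d)) \<longlonglongrightarrow> 0"
    by (rule filterlim_compose[OF _ filterlim_real_sequentially])
  show ?thesis
  proof (rule Lim_null_comparison[OF _ glim])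
    show "\<forall>\<^sub>F d in sequentially. norm (lam_init lam I d * poly P (real d)) \<le> g (real d)"
      unfolding eventually_sequentially
    proof (intro exI[of _ 1] allI impI)
      fix d :: nat assume d: "d \<ge> 1"
      define a where "a = a_num I d"
      define b where "b = b_num I d"
      have abd: "a + b = d" unfolding a_def b_def using ab_sum[OF d] .
      have Ldn: "Ld d \<ge> 0" unfolding Ld_def using lam1_pos
        by (intro mult_nonneg_nonneg prod_nonneg) (auto intro: lam_nonneg)
      have "Ld d \<le> L1 ^ b * (Y * (1/2) ^ a)" unfolding Ld_def a_def[symmetric] b_def[symmetric]
        using Y L1 lam1_pos by (intro mult_mono power_mono prod_nonneg) (auto intro: lam_nonneg)
      also have "(1/2::real) ^ a = (1/2) ^ d * 2 ^ b"
        using abd by (auto simp: power_add field_simps)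
      also have "L1 ^ b * (Y * ((1/2) ^ d * 2 ^ b)) = Y * (2 * L1) ^ b * (1/2) ^ d"
        by (simp add: power_mult_distrib mult_ac)
      also have "(2 * L1) ^ b = exp (real b * c2)"
      proof -
        have "ln ((2 * L1) ^ b) = real b * c2" unfolding c2_def using L1 by (intro ln_realpow)
        then have "exp (real b * c2) = exp (ln ((2 * L1) ^ b))" by simp
        also have "\<dots> = (2 * L1) ^ b" using L1 by (intro exp_ln) simp
        finally show ?thesis by simp
      qed
      also have "exp (real b * c2) \<le> exp (K * (1 + q * ln (real d)) * c2)"
        using bb d c2 unfolding b_def by (auto intro: mult_right_mono)
      also have "exp (K * (1 + q * ln (real d)) * c2) = exp (K * c2) * exp (A * ln (real d))"
        unfolding A_def by (simp add: algebra_simps exp_add[symmetric])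
      finally have Lb: "Ld d \<le> Y * (exp (K * c2) * exp (A * ln (real d))) * (1/2) ^ d"
        using Y by (simp add: mult_left_mono mult_right_mono)
      have pb: "\<bar>poly P (real d)\<bar> \<le> Kp * real d ^ N" using Kp d by simp
      have "norm (lam_init lam I d * poly P (real d)) = Ld d * \<bar>poly P (real d)\<bar>"
        using lam_init_eq[OF d] Ldn by (simp add: abs_mult)
      also have "\<dots> \<le> (Y * (exp (K * c2) * exp (A * ln (real d))) * (1/2) ^ d) * (Kp * real d ^ N)"
        using Lb pb Ldn by (intro mult_mono) auto
      also have "(1/2::real) ^ d = (1/2) powr (real d)" by (simp add: powr_realpow)
      also have "(Y * (exp (K * c2) * exp (A * ln (real d))) * (1/2) powr (real d)) * (Kp * real d ^ N) = g (real d)"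
        unfolding g_def by (simp add: mult_ac)
      finally show "norm (lam_init lam I d * poly P (real d)) \<le> g (real d)" .
    qed
  qed
qed

end



theorem proposition10:
  fixes lam :: "nat \<Rightarrow> real" and I :: "nat \<Rightarrow> nat set" and C p q :: real
  assumes lam_nonneg: "\<And>m. m \<ge> 1 \<Longrightarrow> lam m \<ge> 0"
    and lam_mono: "\<And>m n. 1 \<le> m \<Longrightarrow> m \<le> n \<Longrightarrow> lam n \<le> lam m"
    and lam_lim: "lam \<longlonglongrightarrow> 0"
    and lam2_pos: "lam 2 > 0"
    and I_sub: "\<And>d. d \<ge> 1 \<Longrightarrow> I d \<subseteq> {1..d}"
    and I_ne: "\<And>d. d \<ge> 1 \<Longrightarrow> I d \<noteq> {}"
    and I_1: "I 1 = {1}"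
    and init_pos: "\<And>d. d \<ge> 1 \<Longrightarrow> eps_init lam I d > 0"
    and C_pos: "C > 0" and p_pos: "p > 0" and q_nonneg: "q \<ge> 0"
    and PT: "normalized_bound lam I C p q"
  shows "(\<forall>\<tau>. \<tau> > p / 2 \<longrightarrow> summable (\<lambda>m. lam (Suc m) powr \<tau>))
       \<and> (\<forall>P :: real poly. (\<forall>d::nat. d \<ge> 1 \<longrightarrow> poly P (real d) > 0) \<longrightarrow>
            ((\<lambda>d. lam_init lam I d * poly P (real d)) \<longlonglongrightarrow> 0))
       \<and> (\<lambda>d. real (b_num I d)) \<in> O(\<lambda>d. ln (real d))
       \<and> ((\<lambda>d. real (a_num I d) / real d) \<longlonglongrightarrow> 1)
       \<and> (strongly_poly_tractable_A lam I \<longrightarrow> (\<lambda>d. real (b_num I d)) \<in> O(\<lambda>_. 1))"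
proof -
  interpret S: setting lam I using lam_nonneg lam_mono lam2_pos I_sub by unfold_locales
  obtain K where K: "K \<ge> 0" "\<forall>d\<ge>1. real (b_num I d) \<le> K * (1 + q * ln (real d))"
    using S.b_bound[OF PT p_pos C_pos q_nonneg init_pos] by blast
  have P1: "\<forall>\<tau>. \<tau> > p / 2 \<longrightarrow> summable (\<lambda>m. lam (Suc m) powr \<tau>)"
  proof (intro allI impI)
    fix \<tau> :: real assume t: "\<tau> > p / 2"
    have K0: "C * (2 * lam 1) powr (p/2) \<ge> 0" using C_pos by simp
    show "summable (\<lambda>m. lam (Suc m) powr \<tau>)"
      using S.summable_lam[OF K0 S.lam_powr_bound[OF PT p_pos C_pos I_1 init_pos[of 1]] p_pos t] by simp
  qed
  have P2: "\<forall>P :: real poly. (\<forall>d::nat. d \<ge> 1 \<longrightarrow> poly P (real d) > 0) \<longrightarrow>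
            ((\<lambda>d. lam_init lam I d * poly P (real d)) \<longlonglongrightarrow> 0)"
    using S.superpoly[OF lam_lim K(1) q_nonneg K(2)] by blast
  have P3: "(\<lambda>d. real (b_num I d)) \<in> O(\<lambda>d. ln (real d))"
  proof (rule bigoI[where c = "K * (1 + q)"])
    show "\<forall>\<^sub>F d in at_top. norm (real (b_num I d)) \<le> K * (1 + q) * norm (ln (real d))"
      using eventually_ge_at_top[of "3::nat"]
    proof eventually_elim
      case (elim d)
      have l1: "ln (real d) \<ge> 1"
      proof -
        have "ln (real d) \<ge> ln 3" using elim by simp
        then show ?thesis using ln3_gt_1 by linarith
      qed
      have "real (b_num I d) \<le> K * (1 + q * ln (real d))" using K(2) elim by simp
      also have "\<dots> \<le> K * (ln (real d) + q * ln (real d))" using K(1) l1 by (intro mult_left_mono) auto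
      also have "\<dots> = K * (1 + q) * ln (real d)" by (simp add: algebra_simps)
      finally show ?case using l1 by simp
    qed
  qed
  have P4: "(\<lambda>d. real (a_num I d) / real d) \<longlonglongrightarrow> 1"
  proof -
    define g where "g = (\<lambda>x::real. K * (1 + q * ln x) / x)"
    have "(g \<longlongrightarrow> 0) at_top" unfolding g_def by real_asymp
    then have glim: "(\<lambda>d::nat. g (real d)) \<longlonglongrightarrow> 0"
      by (rule filterlim_compose[OF _ filterlim_real_sequentially])
    have bl: "(\<lambda>d. real (b_num I d) / real d) \<longlonglongrightarrow> 0"
    proof (rule Lim_null_comparison[OF _ glim])
      show "\<forall>\<^sub>F d in sequentially. norm (real (b_num I d) / real d) \<le> g (real d)"
        unfolding eventually_sequentially
      proof (intro exI[of _ 1] allI impI)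
        fix d :: nat assume d: "d \<ge> 1"
        show "norm (real (b_num I d) / real d) \<le> g (real d)"
          unfolding g_def using K(2) d by (simp add: divide_right_mono)
      qed
    qed
    have "(\<lambda>d. 1 - real (b_num I d) / real d) \<longlonglongrightarrow> 1 - 0"
      by (intro tendsto_diff tendsto_const bl)
    moreover have "\<forall>\<^sub>F d in sequentially. 1 - real (b_num I d) / real d = real (a_num I d) / real d"
      unfolding eventually_sequentially
    proof (intro exI[of _ 1] allI impI)
      fix d :: nat assume d: "d \<ge> 1"
      have "real (a_num I d) + real (b_num I d) = real d" using S.ab_sum[OF d] by (metis of_nat_add)
      then show "1 - real (b_num I d) / real d = real (a_num I d) / real d" using d
        by (simp add: field_simps)
    qed
    ultimately show ?thesis by (simp add: tendsto_cong)
  qed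
  have P5: "strongly_poly_tractable_A lam I \<longrightarrow> (\<lambda>d. real (b_num I d)) \<in> O(\<lambda>_. 1)"
  proof
    assume "strongly_poly_tractable_A lam I"
    then obtain C' p' where C': "C' > 0" "p' > 0" "normalized_bound lam I C' p' 0"
      unfolding strongly_poly_tractable_A_def by blast
    obtain K' where K': "K' \<ge> 0" "\<forall>d\<ge>1. real (b_num I d) \<le> K' * (1 + 0 * ln (real d))"
      using S.b_bound[OF C'(3) C'(2) C'(1) _ init_pos] by auto
    show "(\<lambda>d. real (b_num I d)) \<in> O(\<lambda>_. 1)"
    proof (rule bigoI[where c = K'])
      show "\<forall>\<^sub>F d in at_top. norm (real (b_num I d)) \<le> K' * norm (1::real)"
        using eventually_ge_at_top[of "1::nat"] by eventually_elim (use K'(2) in simp)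
    qed
  qed
  show ?thesis using P1 P2 P3 P4 P5 by blast
qed


end
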